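(* Define rooted trees $(S_\alpha,r_\alpha)$ for all ordinals $\alpha\ge 1$ by transfinite recursion: $S_1$ is a single vertex $r_1$; for $\alpha>1$, $S_\alpha$ is obtained from pairwise disjoint copies of the rooted trees $(S_i,r_i)$, $1\le i<\alpha$, by adding a new vertex $r_\alpha$ (the root of $S_\alpha$) joined by an edge to each $r_i$, $1\le i<\alpha$. Then for every ordinal $\alpha$ (including $\alpha=0$), the tree $S_{\alpha+1}$ is cop-win and $\eta(S_{\alpha+1})=\alpha$.
   Context: All graphs are simple and undirected, possibly infinite. For a vertex $v$ of a graph $G$, $N[v]$ denotes its closed neighbourhood. Define binary relations $\leq_\alpha$ on $V(G)$, for every ordinal $\alpha$, by transfinite recursion: $u\leq_0 v$ iff $u=v$; for $\alpha>0$, $u\leq_\alpha v$ iff for every $x\in N[u]$ there exist $y\in N[v]$ and an ordinal $\beta<\alpha$ with $x\leq_\beta y$. For $v\in V(G)$, $\eta(v)$ denotes the least ordinal $\alpha$ such that $u\leq_\alpha v$ for all $u\in V(G)$ (when such $\alpha$ exists), and $\eta(G)=\min_{v\in V(G)}\eta(v)$. A graph is cop-win if in the game of Cops and Robbers a single cop has a strategy guaranteeing capture of the robber (a tree is cop-win iff it contains no ray). *)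

theory Defs
  imports Main
begin

definition cnbhd :: "'a set \<Rightarrow> ('a \<Rightarrow> 'a \<Rightarrow> bool) \<Rightarrow> 'a \<Rightarrow> 'a set" where
  "cnbhd V E v = insert v {w \<in> V. E v w}"

text \<open>Ordinals are represented by elements of an arbitrary well-ordered type 'o;
the ordinal 0 is the least element.\<close>

definition ordle :: "'a set \<Rightarrow> ('a \<Rightarrow> 'a \<Rightarrow> bool) \<Rightarrow> 'o::wellorder \<Rightarrow> 'a \<Rightarrow> 'a \<Rightarrow> bool" where
  "ordle V E = wfrec {(b, a). b < a}
     (\<lambda>f a u v. if (\<forall>b. \<not> b < a) then u = v
                else (\<forall>x\<in>cnbhd V E u. \<exists>y\<in>cnbhd V E v. \<exists>b. b < a \<and> f b x y))"

definition eta_defined :: "'a set \<Rightarrow> ('a \<Rightarrow> 'a \<Rightarrow> bool) \<Rightarrow> 'o::wellorder itself \<Rightarrow> 'a \<Rightarrow> bool" where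
  "eta_defined V E T v = (\<exists>a::'o. \<forall>u\<in>V. ordle V E a u v)"

definition eta_vertex :: "'a set \<Rightarrow> ('a \<Rightarrow> 'a \<Rightarrow> bool) \<Rightarrow> 'a \<Rightarrow> 'o::wellorder" where
  "eta_vertex V E v = (LEAST a. \<forall>u\<in>V. ordle V E a u v)"

definition eta_graph :: "'a set \<Rightarrow> ('a \<Rightarrow> 'a \<Rightarrow> bool) \<Rightarrow> 'o::wellorder" where
  "eta_graph V E = (LEAST a. \<exists>v\<in>V. eta_defined V E TYPE('o) v \<and> eta_vertex V E v = a)"

text \<open>The cop chooses c 0, then the robber chooses r 0; in round n the cop moves
to c (n+1) in N[c n], then the robber moves to r (n+1) in N[r n].\<close>

definition cop_win :: "'a set \<Rightarrow> ('a \<Rightarrow> 'a \<Rightarrow> bool) \<Rightarrow> bool" where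
  "cop_win V E = (\<exists>c0\<in>V. \<exists>\<sigma> :: 'a list \<Rightarrow> 'a list \<Rightarrow> 'a.
     (\<forall>cs rs. cs \<noteq> [] \<longrightarrow> last cs \<in> V \<longrightarrow> \<sigma> cs rs \<in> cnbhd V E (last cs)) \<and>
     (\<forall>c r :: nat \<Rightarrow> 'a.
        c 0 = c0 \<and> r 0 \<in> V \<and>
        (\<forall>n. c (Suc n) = \<sigma> (map c [0..<Suc n]) (map r [0..<Suc n])) \<and>
        (\<forall>n. r (Suc n) \<in> cnbhd V E (r n))
        \<longrightarrow> (\<exists>n. c n = r n \<or> c (Suc n) = r n)))"

text \<open>S_a (a \<ge> 1): root [] ; for each 1 \<le> i < a a copy of S_i whose vertices are
tagged by prefixing i; the root [i] of the copy is joined to the root [].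
"1 \<le> i" means i is not the least element of 'o.\<close>

inductive svert :: "'o::wellorder \<Rightarrow> 'o list \<Rightarrow> bool" where
  root: "svert a []"
| copy: "\<lbrakk>\<exists>b. b < i; i < a; svert i xs\<rbrakk> \<Longrightarrow> svert a (i # xs)"

inductive sedge :: "'o::wellorder \<Rightarrow> 'o list \<Rightarrow> 'o list \<Rightarrow> bool" where
  down: "\<lbrakk>\<exists>b. b < i; i < a\<rbrakk> \<Longrightarrow> sedge a [] [i]"
| up: "\<lbrakk>\<exists>b. b < i; i < a\<rbrakk> \<Longrightarrow> sedge a [i] []"
| copy: "\<lbrakk>\<exists>b. b < i; i < a; sedge i xs ys\<rbrakk> \<Longrightarrow> sedge a (i # xs) (i # ys)"

definition SV :: "'o::wellorder \<Rightarrow> 'o list set" where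
  "SV a = {xs. svert a xs}"

end

theory Submission
  imports Defs
begin

lemma ordle_unfold:
  "ordle V E a u v = (if (\<forall>b. \<not> b < a) then u = v
     else (\<forall>x\<in>cnbhd V E u. \<exists>y\<in>cnbhd V E v. \<exists>b. b < a \<and> ordle V E b x y))"
  unfolding ordle_def
  apply (subst wfrec[OF wellorder_class.wf])
  apply (simp add: cut_apply)
  apply (intro impI iffI ballI; fastforce simp: cut_apply)
  done

lemma ordle_refl: "ordle V E (a::'o::wellorder) u u"
proof (induction a arbitrary: u rule: less_induct)
  case (less a)
  show ?case
  proof (cases "\<forall>b. \<not> b < a")
    case True then show ?thesis by (subst ordle_unfold) simp
  next
    case False
    then obtain b where "b < a" by blast
    then show ?thesis using less by (subst ordle_unfold) auto
  qed
qed

lemma ordle_mono: "ordle V E (a::'o::wellorder) u v \<Longrightarrow> a \<le> b \<Longrightarrow> ordle V E b u v"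
proof -
  assume h: "ordle V E a u v" and ab: "a \<le> b"
  show ?thesis
  proof (cases "a = b")
    case True then show ?thesis using h by simp
  next
    case False
    then have ab': "a < b" using ab by simp
    then have nb: "\<not> (\<forall>c. \<not> c < b)" by blast
    show ?thesis
    proof (cases "\<forall>c. \<not> c < a")
      case True
      then have "u = v" using h by (subst (asm) ordle_unfold) simp
      then show ?thesis using ordle_refl by simp
    next
      case False
      then have "\<forall>x\<in>cnbhd V E u. \<exists>y\<in>cnbhd V E v. \<exists>c. c < a \<and> ordle V E c x y"
        using h by (subst (asm) ordle_unfold) simp
      then have "\<forall>x\<in>cnbhd V E u. \<exists>y\<in>cnbhd V E v. \<exists>c. c < b \<and> ordle V E c x y"
        using ab' by (meson less_trans)
      then show ?thesis using nb by (subst ordle_unfold) auto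
    qed
  qed
qed

definition dec :: "'o::wellorder \<Rightarrow> 'o list \<Rightarrow> bool" where
  "dec a xs = (sorted_wrt (\<lambda>x y. y < x) (a#xs) \<and> (\<forall>x\<in>set xs. \<exists>b. b < x))"

lemma svert_iff: "svert a xs \<longleftrightarrow> dec a xs"
proof (induction xs arbitrary: a)
  case Nil
  then show ?case by (auto simp: dec_def intro: svert.root)
next
  case (Cons i xs)
  have "svert a (i#xs) \<longleftrightarrow> (\<exists>b. b < i) \<and> i < a \<and> svert i xs"
    by (auto elim: svert.cases intro: svert.intros)
  then show ?case using Cons by (auto simp: dec_def intro: less_trans)
qed

lemma sedge_fwd: "sedge a xs ys \<Longrightarrow> svert a xs \<and> svert a ys \<and> (\<exists>j. ys = xs@[j] \<or> xs = ys@[j])"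
  by (induction rule: sedge.induct) (auto intro: svert.intros)

lemma sedge_bwd: "svert a xs \<Longrightarrow> svert a (xs@[j]) \<Longrightarrow> sedge a xs (xs@[j]) \<and> sedge a (xs@[j]) xs"
proof (induction xs arbitrary: a)
  case Nil
  have "(\<exists>b. b < j) \<and> j < a" using Nil.prems(2) by (cases rule: svert.cases) auto
  then show ?case by (auto intro: sedge.intros)
next
  case (Cons i xs)
  from Cons.prems have "(\<exists>b. b < i) \<and> i < a \<and> svert i xs \<and> svert i (xs@[j])"
    by (auto elim: svert.cases)
  then show ?case using Cons.IH by (auto intro: sedge.intros)
qed

lemma nb_iff: "u \<in> SV s \<Longrightarrow> x \<in> cnbhd (SV s) (sedge s) u \<longleftrightarrow>
   x = u \<or> (dec s x \<and> (\<exists>j. x = u@[j] \<or> u = x@[j]))"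
  unfolding cnbhd_def SV_def
  using sedge_fwd[of s u x] sedge_bwd[of s u] sedge_bwd[of s x] 
  by (auto simp: svert_iff)

lemma SV_iff: "x \<in> SV s \<longleftrightarrow> dec s x"
  by (simp add: SV_def svert_iff)

lemma dec_prefix: "dec s (xs@ys) \<Longrightarrow> dec s xs"
  by (simp add: dec_def sorted_wrt_append)

lemma dec_lt: "dec s (v@[j]@k#r) \<Longrightarrow> k < j"
  by (simp add: dec_def sorted_wrt_append)

lemma dec_nz: "dec s (v@[j]@r) \<Longrightarrow> \<exists>b. b < j"
  by (simp add: dec_def)

lemma dec_snoc: "dec s (w@[i]) \<Longrightarrow> b < i \<Longrightarrow> (\<exists>c. c < b) \<Longrightarrow> dec s (w@[i]@[b])"
  by (auto simp: dec_def sorted_wrt_append intro: less_trans)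

lemma nb_dest: "y \<in> cnbhd (SV s) (sedge s) v \<Longrightarrow> y = v \<or> (\<exists>j. y = v@[j] \<or> v = y@[j])"
  unfolding cnbhd_def using sedge_fwd by blast

lemma ext_nb: "\<not>(\<exists>r. v = p@r) \<Longrightarrow> y = v \<or> (\<exists>j. y = v@[j] \<or> v = y@[j]) \<Longrightarrow> (\<exists>r. y = p@r) \<Longrightarrow> y = p"
proof -
  assume nv: "\<not>(\<exists>r. v = p@r)" and yv: "y = v \<or> (\<exists>j. y = v@[j] \<or> v = y@[j])"
    and "\<exists>r. y = p@r"
  then obtain r where yr: "y = p@r" by blast
  show "y = p"
  proof (cases "r = []")
    case True then show ?thesis using yr by simp
  next
    case False
    from yv show ?thesis
    proof (elim disjE exE)
      assume "y = v" then show ?thesis using nv yr by blast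
    next
      fix j assume "y = v@[j]"
      then have "v = p @ butlast r" using yr False
        by (metis butlast_append butlast_snoc)
      then show ?thesis using nv by blast
    next
      fix j assume "v = y@[j]"
      then show ?thesis using nv yr by simp
    qed
  qed
qed

lemma claimA: "dec s (v@[j]@r) \<Longrightarrow> ordle (SV s) (sedge s) j (v@[j]@r) v"
proof (induction j arbitrary: v r rule: less_induct)
  case (less j)
  define w where "w = v@[j]"
  obtain b0 where b0: "b0 < j" using dec_nz[OF less.prems] by blast
  have uV: "v@[j]@r \<in> SV s" using less.prems SV_iff by blast
  have vV: "v \<in> SV s" using dec_prefix[of s v "[j]@r"] less.prems by (simp add: SV_iff)
  have wdec: "dec s w" using dec_prefix[of s "v@[j]" r] less.prems w_def by simp
  have wN: "w \<in> cnbhd (SV s) (sedge s) v" using nb_iff[OF vV] wdec w_def by blast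
  have helper: "\<exists>b<j. ordle (SV s) (sedge s) b x w" if "dec s x" "x = w@r'" for x r'
  proof (cases r')
    case Nil then show ?thesis using b0 that ordle_refl[of "SV s" "sedge s" b0 w] by auto
  next
    case (Cons k r'')
    have "k < j" using that Cons w_def dec_lt[of s v j k r''] by simp
    moreover have "ordle (SV s) (sedge s) k x w"
      using less.IH[OF \<open>k < j\<close>, of w r''] that Cons by simp
    ultimately show ?thesis by blast
  qed
  have main: "\<forall>x\<in>cnbhd (SV s) (sedge s) (v@[j]@r). \<exists>y\<in>cnbhd (SV s) (sedge s) v.
      \<exists>b. b < j \<and> ordle (SV s) (sedge s) b x y"
  proof
    fix x assume xN: "x \<in> cnbhd (SV s) (sedge s) (v@[j]@r)"
    then have xc: "x = v@[j]@r \<or> (dec s x \<and> (\<exists>k. x = v@[j]@r@[k] \<or> v@[j]@r = x@[k]))"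
      using nb_iff[OF uV] by simp
    show "\<exists>y\<in>cnbhd (SV s) (sedge s) v. \<exists>b. b < j \<and> ordle (SV s) (sedge s) b x y"
    proof (cases "r = []")
      case True
      from xc show ?thesis
      proof (elim disjE conjE exE)
        assume "x = v@[j]@r" then show ?thesis using helper[of x "[]"] True w_def wdec wN by auto
      next
        fix k assume "dec s x" "x = v@[j]@r@[k]"
        then show ?thesis using helper[of x "[k]"] True w_def wN by auto
      next
        fix k assume "dec s x" "v@[j]@r = x@[k]"
        then have "x = v" using True by simp
        then show ?thesis using b0 ordle_refl vV cnbhd_def by (metis insertI1)
      qed
    next
      case False
      from xc show ?thesis
      proof (elim disjE conjE exE)
        assume "x = v@[j]@r" then show ?thesis using helper[of x r] less.prems w_def wN by auto
      next
        fix k assume "dec s x" "x = v@[j]@r@[k]"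
        then show ?thesis using helper[of x "r@[k]"] w_def wN by auto
      next
        fix k assume d: "dec s x" and e: "v@[j]@r = x@[k]"
        then have "x = w @ butlast r" using False w_def
          by (metis append_assoc butlast_append butlast_snoc)
        then show ?thesis using helper[of x "butlast r"] d wN by auto
      qed
    qed
  qed
  have "\<not> (\<forall>b. \<not> b < j)" using b0 by blast
  then show ?case using main by (subst ordle_unfold) simp
qed

lemma claimE: "dec s (w@[i]) \<Longrightarrow> \<beta> < i \<Longrightarrow> \<not>(\<exists>r. v = w@[i]@r) \<Longrightarrow>
   \<not> ordle (SV s) (sedge s) \<beta> (w@[i]) v"
proof (induction \<beta> arbitrary: w i v rule: less_induct)
  case (less \<beta>)
  show ?case
  proof (cases "\<forall>b. \<not> b < \<beta>")
    case True
    then show ?thesis using less.prems(3) by (subst ordle_unfold) force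
  next
    case False
    then have dx: "dec s (w@[i]@[\<beta>])" using dec_snoc less.prems by blast
    have uV: "w@[i] \<in> SV s" using less.prems SV_iff by blast
    have xN: "w@[i]@[\<beta>] \<in> cnbhd (SV s) (sedge s) (w@[i])"
      using nb_iff[OF uV] dx by auto
    show ?thesis
    proof
      assume "ordle (SV s) (sedge s) \<beta> (w@[i]) v"
      then have "\<forall>x\<in>cnbhd (SV s) (sedge s) (w@[i]). \<exists>y\<in>cnbhd (SV s) (sedge s) v.
        \<exists>b. b < \<beta> \<and> ordle (SV s) (sedge s) b x y"
        using False by (subst (asm) ordle_unfold) simp
      then obtain y \<gamma> where yN: "y \<in> cnbhd (SV s) (sedge s) v" and g: "\<gamma> < \<beta>"
        and o: "ordle (SV s) (sedge s) \<gamma> (w@[i]@[\<beta>]) y"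
        using xN by blast
      have "\<not>(\<exists>r. y = (w@[i])@[\<beta>]@r)"
      proof
        assume ex: "\<exists>r. y = (w@[i])@[\<beta>]@r"
        then have "\<exists>r. y = (w@[i])@r" by auto
        then have "y = w@[i]" using ext_nb[of v "w@[i]" y] less.prems(3) nb_dest[OF yN] by auto
        then show False using ex by auto
      qed
      then have "\<not> ordle (SV s) (sedge s) \<gamma> ((w@[i])@[\<beta>]) y"
        using less.IH[OF g, of "w@[i]" \<beta> y] g dx less.prems(2) by simp
      then show False using o by simp
    qed
  qed
qed

lemma claimF: "dec s (w@[i]) \<Longrightarrow> \<beta> \<le> i \<Longrightarrow> \<not>(\<exists>r. v = w@[i]@r) \<Longrightarrow> v \<noteq> w \<Longrightarrow>
   \<not> ordle (SV s) (sedge s) \<beta> (w@[i]) v"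
proof
  assume d: "dec s (w@[i])" and bi: "\<beta> \<le> i" and nv: "\<not>(\<exists>r. v = w@[i]@r)" and vw: "v \<noteq> w"
    and o: "ordle (SV s) (sedge s) \<beta> (w@[i]) v"
  show False
  proof (cases "\<forall>b. \<not> b < \<beta>")
    case True
    then show ?thesis using o nv by (subst (asm) ordle_unfold) force
  next
    case False
    have xN: "w@[i] \<in> cnbhd (SV s) (sedge s) (w@[i])" by (simp add: cnbhd_def)
    have "\<forall>x\<in>cnbhd (SV s) (sedge s) (w@[i]). \<exists>y\<in>cnbhd (SV s) (sedge s) v.
        \<exists>b. b < \<beta> \<and> ordle (SV s) (sedge s) b x y"
      using o False by (subst (asm) ordle_unfold) simp
    then obtain y \<gamma> where yN: "y \<in> cnbhd (SV s) (sedge s) v" and g: "\<gamma> < \<beta>"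
      and o2: "ordle (SV s) (sedge s) \<gamma> (w@[i]) y"
      using xN by blast
    have "\<not>(\<exists>r. y = w@[i]@r)"
    proof
      assume ex: "\<exists>r. y = w@[i]@r"
      then have "y = w@[i]" using ext_nb[of v "w@[i]" y] nv nb_dest[OF yN] by auto
      then show False using nb_dest[OF yN] nv vw by auto
    qed
    moreover have "\<gamma> < i" using g bi by simp
    ultimately show False using claimE[OF d] o2 by blast
  qed
qed

lemma upper:
  assumes "\<forall>x. (\<alpha>::'o::wellorder) < x \<longrightarrow> s \<le> x" and "u \<in> SV s"
  shows "ordle (SV s) (sedge s) \<alpha> u []"
proof (cases u)
  case Nil then show ?thesis using ordle_refl by simp
next
  case (Cons j r)
  have d: "dec s ([]@[j]@r)" using assms(2) Cons by (simp add: SV_iff)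
  then have "j < s" by (simp add: dec_def)
  then have "j \<le> \<alpha>" using assms(1) by (meson not_le)
  then show ?thesis using claimA[OF d] ordle_mono Cons by simp
qed

lemma lower:
  assumes "v \<in> SV s" "\<beta> < \<alpha>" "\<alpha> < (s::'o::wellorder)"
  shows "\<exists>u\<in>SV s. \<not> ordle (SV s) (sedge s) \<beta> u v"
proof (cases "\<exists>r. v = [\<alpha>]@r")
  case False
  have d: "dec s ([]@[\<alpha>])" using assms by (auto simp: dec_def)
  then have "\<not> ordle (SV s) (sedge s) \<beta> ([]@[\<alpha>]) v" using claimE[OF d assms(2)] False by simp
  then show ?thesis using d SV_iff by (metis append_Nil)
next
  case True
  then have vne: "v \<noteq> []" by auto
  show ?thesis
  proof (cases "\<forall>b. \<not> b < \<beta>")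
    case T: True
    have "\<not> ordle (SV s) (sedge s) \<beta> [] v" using T vne by (subst ordle_unfold) simp
    moreover have "[] \<in> SV s" by (simp add: SV_iff dec_def)
    ultimately show ?thesis by blast
  next
    case F: False
    have d: "dec s ([]@[\<beta>])" using assms F by (auto simp: dec_def intro: less_trans)
    have "\<not>(\<exists>r. v = []@[\<beta>]@r)" using True assms(2) by auto
    then have "\<not> ordle (SV s) (sedge s) \<beta> ([]@[\<beta>]) v" using claimF[OF d order_refl] vne by blast
    then show ?thesis using d SV_iff by (metis append_Nil)
  qed
qed

lemma eta_part:
  fixes \<alpha> s :: "'o::wellorder"
  assumes "\<alpha> < s" and "\<forall>x. \<alpha> < x \<longrightarrow> s \<le> x"
  shows "(\<exists>v\<in>SV s. eta_defined (SV s) (sedge s) TYPE('o) v)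
         \<and> (eta_graph (SV s) (sedge s) :: 'o) = \<alpha>"
proof -
  have rV: "[] \<in> SV s" by (simp add: SV_iff dec_def)
  have P: "\<forall>u\<in>SV s. ordle (SV s) (sedge s) \<alpha> u []" using upper assms(2) by blast
  have def0: "eta_defined (SV s) (sedge s) TYPE('o) []" unfolding eta_defined_def using P by blast
  have ev0: "(eta_vertex (SV s) (sedge s) [] :: 'o) = \<alpha>" unfolding eta_vertex_def
  proof (rule Least_equality)
    show "\<forall>u\<in>SV s. ordle (SV s) (sedge s) \<alpha> u []" by (rule P)
  next
    fix y assume "\<forall>u\<in>SV s. ordle (SV s) (sedge s) (y::'o) u []"
    then show "\<alpha> \<le> y" using lower[OF rV _ assms(1)] by (meson not_le)
  qed
  have "(eta_graph (SV s) (sedge s) :: 'o) = \<alpha>" unfolding eta_graph_def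
  proof (rule Least_equality)
    show "\<exists>v\<in>SV s. eta_defined (SV s) (sedge s) TYPE('o) v \<and> eta_vertex (SV s) (sedge s) v = \<alpha>"
      using rV def0 ev0 by blast
  next
    fix y assume "\<exists>v\<in>SV s. eta_defined (SV s) (sedge s) TYPE('o) v \<and> eta_vertex (SV s) (sedge s) v = (y::'o)"
    then obtain v where vV: "v \<in> SV s" and dv: "eta_defined (SV s) (sedge s) TYPE('o) v"
      and ey: "eta_vertex (SV s) (sedge s) v = y" by blast
    from dv obtain a :: 'o where "\<forall>u\<in>SV s. ordle (SV s) (sedge s) a u v" unfolding eta_defined_def by blast
    then have "\<forall>u\<in>SV s. ordle (SV s) (sedge s) (LEAST a::'o. \<forall>u\<in>SV s. ordle (SV s) (sedge s) a u v) u v"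
      by (rule LeastI[where P="\<lambda>a. \<forall>u\<in>SV s. ordle (SV s) (sedge s) a u v"])
    then have "\<forall>u\<in>SV s. ordle (SV s) (sedge s) y u v"
      using ey unfolding eta_vertex_def by simp
    then show "\<alpha> \<le> y" using lower[OF vV _ assms(1)] by (meson not_le)
  qed
  then show ?thesis using rV def0 by blast
qed

definition cstep :: "'a list set \<Rightarrow> 'a list \<Rightarrow> 'a list \<Rightarrow> 'a list" where
  "cstep V c r = (if r \<in> V \<and> (\<exists>k rest. r = c@k#rest) then take (Suc (length c)) r else c)"

lemma cstep_ext: "r \<in> V \<Longrightarrow> r = c@k#rest \<Longrightarrow> cstep V c r = c@[k]"
  unfolding cstep_def by auto

lemma cstep_nb: "c \<in> SV s \<Longrightarrow> cstep (SV s) c r \<in> cnbhd (SV s) (sedge s) c"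
proof (cases "r \<in> SV s \<and> (\<exists>k rest. r = c@k#rest)")
  case True
  then obtain k rest where r: "r \<in> SV s" "r = c@k#rest" by blast
  then have e: "cstep (SV s) c r = c@[k]" by (rule cstep_ext)
  have "dec s (c@[k]@rest)" using r by (simp add: SV_iff)
  then have "dec s (c@[k])" using dec_prefix[of s "c@[k]" rest] by simp
  moreover assume "c \<in> SV s"
  ultimately show ?thesis using e nb_iff[of c s "c@[k]"] by auto
next
  case False
  then show ?thesis unfolding cstep_def cnbhd_def by auto
qed

lemma cop_part: "cop_win (SV (s::'o::wellorder)) (sedge s)"
  unfolding cop_win_def
proof (intro bexI[of _ "[]"] exI[of _ "\<lambda>cs rs. cstep (SV s) (last cs) (last rs)"] conjI allI impI)
  show "[] \<in> SV s" by (simp add: SV_iff dec_def)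
next
  fix cs rs :: "'o list list"
  assume "last cs \<in> SV s"
  then show "cstep (SV s) (last cs) (last rs) \<in> cnbhd (SV s) (sedge s) (last cs)" by (rule cstep_nb)
next
  fix c r :: "nat \<Rightarrow> 'o list"
  assume H: "c 0 = [] \<and> r 0 \<in> SV s \<and>
     (\<forall>n. c (Suc n) = cstep (SV s) (last (map c [0..<Suc n])) (last (map r [0..<Suc n]))) \<and>
     (\<forall>n. r (Suc n) \<in> cnbhd (SV s) (sedge s) (r n))"
  have c0: "c 0 = []" and r0: "r 0 \<in> SV s" using H by auto
  have cS: "c (Suc n) = cstep (SV s) (c n) (r n)" for n using H by simp
  have rS: "r (Suc n) \<in> cnbhd (SV s) (sedge s) (r n)" for n using H by blast
  have rV: "r n \<in> SV s" for n
  proof (induction n)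
    case 0 then show ?case using r0 .
  next
    case (Suc n)
    then show ?case using rS[of n] nb_iff[OF Suc] by (auto simp: SV_iff)
  qed
  show "\<exists>n. c n = r n \<or> c (Suc n) = r n"
  proof (rule ccontr)
    assume "\<not> (\<exists>n. c n = r n \<or> c (Suc n) = r n)"
    then have nc: "c n \<noteq> r n" "c (Suc n) \<noteq> r n" for n by auto
    have inv: "\<exists>k rest. r n = c n @ k # rest" for n
    proof (induction n)
      case 0
      then show ?case using c0 nc(1)[of 0] by (cases "r 0") auto
    next
      case (Suc n)
      then obtain k rest where e: "r n = c n @ k # rest" by blast
      have cs: "c (Suc n) = c n @ [k]" using cS[of n] cstep_ext[OF rV e] by simp
      have rne: "rest \<noteq> []" using nc(2)[of n] e cs by auto
      from nb_dest[OF rS[of n]] show ?case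
      proof (elim disjE exE)
        assume "r (Suc n) = r n"
        then show ?thesis using e cs rne by (cases rest) auto
      next
        fix j assume "r (Suc n) = r n @ [j]"
        then show ?thesis using e cs rne by (cases rest) auto
      next
        fix j assume h: "r n = r (Suc n) @ [j]"
        then have "r (Suc n) = c (Suc n) @ butlast rest" using e cs rne
          by (metis append_Cons append_assoc append_Nil butlast_append butlast_snoc)
        moreover have "butlast rest \<noteq> []" using calculation nc(1)[of "Suc n"] by auto
        ultimately show ?thesis by (cases "butlast rest") auto
      qed
    qed
    have "\<exists>k. c (Suc n) = c n @ [k]" for n
    proof -
      obtain k rest where e: "r n = c n @ k # rest" using inv by blast
      show ?thesis using cS[of n] cstep_ext[OF rV e] by simp
    qed
    then obtain g where g: "\<And>n. c (Suc n) = c n @ [g n]" by metis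
    have "g (Suc n) < g n" for n
    proof -
      obtain k rest where e: "r (Suc (Suc n)) = c (Suc (Suc n)) @ k # rest" using inv by blast
      have "dec s (c (Suc (Suc n)) @ k # rest)" using rV[of "Suc (Suc n)"] e by (simp add: SV_iff)
      then have "dec s (c n @ [g n] @ g (Suc n) # (k # rest))" using g by simp
      then show ?thesis by (rule dec_lt)
    qed
    then show False using wf_iff_no_infinite_down_chain[THEN iffD1, OF wellorder_class.wf]
      by blast
  qed
qed

theorem lemma3p4:
  fixes \<alpha> s :: "'o::wellorder"
  assumes "\<alpha> < s" and "\<forall>x. \<alpha> < x \<longrightarrow> s \<le> x"
  shows "cop_win (SV s) (sedge s)
         \<and> (\<exists>v\<in>SV s. eta_defined (SV s) (sedge s) TYPE('o) v)
         \<and> (eta_graph (SV s) (sedge s) :: 'o) = \<alpha>"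
  using cop_part[of s] eta_part[OF assms] by blast

end
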